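(* Let $k>1$ and let $f:\mathbb{R}\to\mathbb{R}$ be a positive, continuously differentiable function, and consider the planar system $$\frac{dI}{d\tau}=I\,[f(R)(1-I-R)-k],\qquad \frac{dR}{d\tau}=(k-1)I-R.$$ If $f(0)/k<1$ and $(0,0)$ is the only equilibrium point of this system, then $(0,0)$ is globally stable.
   Context: Here "globally stable" means: $(0,0)$ is locally asymptotically stable and every solution with initial condition $(I(0),R(0))$ in the region $Z=\{(I,R): 0\le I\le 1,\ 0\le R\le 1,\ I+R\le 1\}$ (the region corresponding to meaningful population proportions, which is positively invariant) converges to $(0,0)$ as $\tau\to\infty$. *)

theory Defs
  imports "HOL-Analysis.Analysis"
begin

definition sys_sol :: "(real \<Rightarrow> real) \<Rightarrow> real \<Rightarrow> (real \<Rightarrow> real) \<Rightarrow> (real \<Rightarrow> real) \<Rightarrow> real set \<Rightarrow> bool" where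
  "sys_sol f k I R S \<longleftrightarrow>
     (\<forall>t\<in>S. (I has_real_derivative (I t * (f (R t) * (1 - I t - R t) - k))) (at t within S)
          \<and> (R has_real_derivative ((k - 1) * I t - R t)) (at t within S))"

definition is_equilibrium :: "(real \<Rightarrow> real) \<Rightarrow> real \<Rightarrow> real \<times> real \<Rightarrow> bool" where
  "is_equilibrium f k p \<longleftrightarrow>
     fst p * (f (snd p) * (1 - fst p - snd p) - k) = 0 \<and> (k - 1) * fst p - snd p = 0"

definition Zreg :: "(real \<times> real) set" where
  "Zreg = {(i, r). 0 \<le> i \<and> i \<le> 1 \<and> 0 \<le> r \<and> r \<le> 1 \<and> i + r \<le> 1}"

definition origin_stable :: "(real \<Rightarrow> real) \<Rightarrow> real \<Rightarrow> bool" where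
  "origin_stable f k \<longleftrightarrow>
     (\<forall>\<epsilon>>0. \<exists>\<delta>>0. \<forall>I R T. sys_sol f k I R {0..T} \<and> norm (I 0, R 0) < \<delta>
        \<longrightarrow> (\<forall>t\<in>{0..T}. norm (I t, R t) < \<epsilon>))"

definition origin_attractive :: "(real \<Rightarrow> real) \<Rightarrow> real \<Rightarrow> bool" where
  "origin_attractive f k \<longleftrightarrow>
     (\<exists>\<delta>>0. \<forall>I R. sys_sol f k I R {0..} \<and> norm (I 0, R 0) < \<delta>
        \<longrightarrow> ((\<lambda>t. (I t, R t)) \<longlongrightarrow> (0, 0)) at_top)"

definition origin_las :: "(real \<Rightarrow> real) \<Rightarrow> real \<Rightarrow> bool" where
  "origin_las f k \<longleftrightarrow> origin_stable f k \<and> origin_attractive f k"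

definition origin_globally_stable :: "(real \<Rightarrow> real) \<Rightarrow> real \<Rightarrow> bool" where
  "origin_globally_stable f k \<longleftrightarrow> origin_las f k \<and>
     (\<forall>I R. sys_sol f k I R {0..} \<and> (I 0, R 0) \<in> Zreg
        \<longrightarrow> ((\<lambda>t. (I t, R t)) \<longlongrightarrow> (0, 0)) at_top)"

end

theory Submission
  imports Defs
begin


lemma antimono_I:
  fixes W W' :: "real \<Rightarrow> real"
  assumes d: "\<forall>s\<in>{0..T}. (W has_real_derivative W' s) (at s within {0..T})"
    and t: "t \<in> {0..T}" and neg: "\<forall>s. 0 < s \<longrightarrow> s < t \<longrightarrow> W' s \<le> 0"
  shows "W t \<le> W 0"
proof (cases "t = 0")
  case True thus ?thesis by simp
next
  case False
  hence t0: "0 < t" using t by auto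
  have "\<forall>s\<in>{0..t}. continuous (at s within {0..T}) W"
    using d t by (auto intro: DERIV_continuous)
  hence cont: "continuous_on {0..t} W"
    unfolding continuous_on_eq_continuous_within
    using t by (auto intro: continuous_within_subset)
  have dz: "(W has_real_derivative W' z) (at z)" if "0 < z" "z < t" for z
  proof -
    have "at z within {0..T} = at z" using that t by (intro at_within_Icc_at) auto
    thus ?thesis using d that t by (metis atLeastAtMost_iff less_eq_real_def order.trans)
  qed
  obtain l z where z: "0 < z" "z < t" "(W has_real_derivative l) (at z)" "W t - W 0 = (t - 0) * l"
    using MVT[OF t0 cont] dz by (meson real_differentiable_def)
  have "l = W' z" using z dz DERIV_unique by blast
  hence "l \<le> 0" using neg z by auto
  hence "t * l \<le> 0" using t0 by (simp add: mult_nonneg_nonpos)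
  thus ?thesis using z by simp
qed

lemma decay:
  fixes V V' :: "real \<Rightarrow> real"
  assumes d: "\<forall>s\<in>{0..T}. (V has_real_derivative V' s) (at s within {0..T})"
    and t: "t \<in> {0..T}" and neg: "\<forall>s. 0 < s \<longrightarrow> s < t \<longrightarrow> V' s \<le> - e * V s"
  shows "V t * exp (e * t) \<le> V 0"
proof -
  have d2: "\<forall>s\<in>{0..T}. ((\<lambda>s. V s * exp (e * s)) has_real_derivative
     (V' s * exp (e * s) + V s * (exp (e * s) * e))) (at s within {0..T})"
    using d by (auto intro!: derivative_eq_intros)
  have "\<forall>s. 0 < s \<longrightarrow> s < t \<longrightarrow> V' s * exp (e * s) + V s * (exp (e * s) * e) \<le> 0"
  proof (intro allI impI)
    fix s assume "0 < s" "s < t"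
    hence "V' s + e * V s \<le> 0" using neg by auto
    hence "(V' s + e * V s) * exp (e * s) \<le> 0" by (simp add: mult_nonpos_nonneg)
    thus "V' s * exp (e * s) + V s * (exp (e * s) * e) \<le> 0" by (simp add: algebra_simps)
  qed
  from antimono_I[OF d2 t this] show ?thesis by simp
qed

lemma barrier:
  fixes phi :: "real \<Rightarrow> real"
  assumes c: "continuous_on {0..T} phi" and p0: "phi 0 < L"
    and h: "\<forall>t\<in>{0..T}. (\<forall>s\<in>{0..<t}. phi s < L) \<longrightarrow> phi t \<le> phi 0"
  shows "\<forall>t\<in>{0..T}. phi t < L"
proof (rule ccontr)
  assume nt: "\<not> (\<forall>t\<in>{0..T}. phi t < L)"
  define A where "A = {x \<in> {0..T}. L \<le> phi x}"
  have ne: "A \<noteq> {}" using nt unfolding A_def by force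
  have cl: "closed A" unfolding A_def
    by (rule continuous_on_closed_Collect_le[OF continuous_on_const c]) simp
  have bb: "bdd_below A" unfolding A_def by (rule bdd_belowI[of _ 0]) auto
  define t1 where "t1 = Inf A"
  have t1A: "t1 \<in> A" unfolding t1_def using closed_contains_Inf[OF ne bb cl] .
  have "\<forall>s\<in>{0..<t1}. phi s < L"
  proof
    fix s assume s: "s \<in> {0..<t1}"
    have "s \<notin> A"
    proof
      assume "s \<in> A" hence "t1 \<le> s" unfolding t1_def using bb by (simp add: cInf_lower)
      thus False using s by auto
    qed
    moreover have "s \<in> {0..T}" using s t1A unfolding A_def by auto
    ultimately show "phi s < L" unfolding A_def by auto
  qed
  hence "phi t1 \<le> phi 0" using h t1A unfolding A_def by auto
  thus False using p0 t1A unfolding A_def by auto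
qed

lemma root_bound_tendsto:
  fixes x :: "real \<Rightarrow> real"
  assumes p: "p > 0" and e: "e > 0" and b: "\<forall>t\<ge>0. \<bar>x t\<bar> ^ p \<le> C * exp (- e * t)"
  shows "(x \<longlongrightarrow> 0) at_top"
proof (rule Lim_null_comparison)
  show "\<forall>\<^sub>F t in at_top. norm (x t) \<le> root p (C * exp (- e * t))"
  proof (rule eventually_mono[OF eventually_ge_at_top[of 0]])
    fix t :: real assume "0 \<le> t"
    hence "\<bar>x t\<bar> ^ p \<le> C * exp (- e * t)" using b by auto
    hence "root p (\<bar>x t\<bar> ^ p) \<le> root p (C * exp (- e * t))" using p by simp
    moreover have "root p (\<bar>x t\<bar> ^ p) = \<bar>x t\<bar>" using p by (simp add: real_root_power_cancel)
    ultimately show "norm (x t) \<le> root p (C * exp (- e * t))" by simp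
  qed
  have "filterlim (\<lambda>t. - e * t) at_bot at_top"
    unfolding filterlim_uminus_at_bot using e
    by (auto intro!: filterlim_tendsto_pos_mult_at_top[OF tendsto_const] filterlim_ident)
  hence "((\<lambda>t. exp (- e * t)) \<longlongrightarrow> 0) at_top"
    using filterlim_compose[OF exp_at_bot] by blast
  hence "((\<lambda>t. C * exp (- e * t)) \<longlongrightarrow> C * 0) at_top" by (intro tendsto_mult tendsto_const)
  hence "((\<lambda>t. root p (C * exp (- e * t))) \<longlongrightarrow> root p (C * 0)) at_top" by (rule tendsto_real_root)
  thus "((\<lambda>t. root p (C * exp (- e * t))) \<longlongrightarrow> 0) at_top" by simp
qed

lemma deriv_cont:
  assumes "\<forall>s\<in>{0..T}. (W has_real_derivative W' s) (at s within {0..T})"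
  shows "continuous_on {0..T} W"
  unfolding continuous_on_eq_continuous_within using assms by (auto intro: DERIV_continuous)

lemma nonneg_inv:
  fixes f I R :: "real \<Rightarrow> real"
  assumes s: "sys_sol f k I R {0..T}" and fc: "continuous_on UNIV f" and k: "k > 1"
    and i0: "I 0 \<ge> 0" and r0: "R 0 \<ge> 0"
  shows "\<forall>t\<in>{0..T}. I t \<ge> 0 \<and> R t \<ge> 0"
proof -
  define g where "g = (\<lambda>s. f (R s) * (1 - I s - R s) - k)"
  have dI: "\<forall>s\<in>{0..T}. (I has_real_derivative I s * g s) (at s within {0..T})"
    using s unfolding sys_sol_def g_def by auto
  have dR: "\<forall>s\<in>{0..T}. (R has_real_derivative (k - 1) * I s - R s) (at s within {0..T})"
    using s unfolding sys_sol_def by auto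
  have cI: "continuous_on {0..T} I" using deriv_cont[OF dI] .
  have cR: "continuous_on {0..T} R" using deriv_cont[OF dR] .
  have cfR: "continuous_on {0..T} (\<lambda>s. f (R s))"
    using continuous_on_compose2[OF fc cR] by auto
  have cg: "continuous_on {0..T} g" unfolding g_def
    by (intro continuous_intros cfR cI cR)
  define G where "G = (\<lambda>u. integral {0..u} g)"
  have dG: "\<forall>s\<in>{0..T}. (G has_real_derivative g s) (at s within {0..T})"
    unfolding G_def has_real_derivative_iff_has_vector_derivative
    using integral_has_vector_derivative[OF cg] by auto
  define Q where "Q = (\<lambda>s. I s * exp (- G s))"
  have dQ: "\<forall>s\<in>{0..T}. (Q has_real_derivative 0) (at s within {0..T})"
  proof
    fix s assume "s \<in> {0..T}"
    hence "(Q has_real_derivative (I s * g s * exp (- G s) + I s * (exp (- G s) * (- g s)))) (at s within {0..T})"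
      unfolding Q_def using dI dG by (auto intro!: derivative_eq_intros)
    thus "(Q has_real_derivative 0) (at s within {0..T})" by (simp add: algebra_simps)
  qed
  have dQ': "\<forall>s\<in>{0..T}. ((\<lambda>s. - Q s) has_real_derivative - 0) (at s within {0..T})"
    using dQ by (auto intro!: derivative_eq_intros)
  have G0: "G 0 = 0" unfolding G_def by simp
  have Iinv: "I t \<ge> 0" if t: "t \<in> {0..T}" for t
  proof -
    have "Q t \<le> Q 0" by (rule antimono_I[OF dQ t]) auto
    moreover have "- Q t \<le> - Q 0" by (rule antimono_I[OF dQ' t]) auto
    ultimately have "Q t = I 0" unfolding Q_def using G0 by simp
    hence "I t = I 0 * exp (G t)" unfolding Q_def by (simp add: exp_minus field_simps)
    thus ?thesis using i0 by simp
  qed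
  have dW: "\<forall>s\<in>{0..T}. ((\<lambda>s. - (R s * exp s)) has_real_derivative - (((k - 1) * I s - R s) * exp s + R s * exp s)) (at s within {0..T})"
    using dR by (auto intro!: derivative_eq_intros)
  have Rinv: "R t \<ge> 0" if t: "t \<in> {0..T}" for t
  proof -
    have "- (R t * exp t) \<le> - (R 0 * exp 0)"
    proof (rule antimono_I[OF dW t], intro allI impI)
      fix s assume "0 < s" "s < t"
      hence "I s \<ge> 0" using Iinv t by auto
      hence "0 \<le> ((k - 1) * I s) * exp s" using k by simp
      thus "- (((k - 1) * I s - R s) * exp s + R s * exp s) \<le> 0" by (simp add: algebra_simps)
    qed
    hence "R t * exp t \<ge> 0" using r0 by simp
    thus ?thesis by (simp add: zero_le_mult_iff)
  qed
  show ?thesis using Iinv Rinv by auto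
qed

lemma iden_aux:
  fixes c a I R :: real
  assumes "c > 0"
  shows "- a * I^2 + a / (2 * c^2) * (2 * R * (c * I - R)) = - (a/2) * I^2 - a / (2 * c^2) * R^2 - (a/2) * (I - R / c)^2"
proof -
  have c: "c \<noteq> 0" using assms by simp
  have "(I - R / c)^2 = I^2 - 2 * I * R / c + R^2 / c^2" using c by (simp add: power2_eq_square field_simps)
  thus ?thesis using c by (simp add: power2_eq_square field_simps)
qed

lemma local_est:
  fixes f :: "real \<Rightarrow> real"
  assumes k: "k > 1" and f0: "f 0 < k" and fpos: "\<forall>x. f x > 0" and fc: "isCont f 0"
  shows "\<exists>r0>0. \<exists>\<gamma>>0. \<exists>e>0. \<forall>I R. \<bar>I\<bar> \<le> r0 \<and> \<bar>R\<bar> \<le> r0 \<longrightarrow>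
     2 * I * (I * (f R * (1 - I - R) - k)) + \<gamma> * (2 * R * ((k - 1) * I - R)) \<le> - e * (I^2 + \<gamma> * R^2)"
proof -
  define a where "a = k - f 0"
  have a: "a > 0" using f0 unfolding a_def by simp
  have fp0: "f 0 > 0" using fpos by auto
  obtain d where d: "d > 0" "\<forall>y. dist y 0 < d \<longrightarrow> dist (f y) (f 0) < a / 6"
    using fc a unfolding continuous_at_eps_delta by (metis divide_pos_pos zero_less_numeral)
  define r0 where "r0 = min (1/4) (min (d/2) (a / (8 * f 0)))"
  have r0: "r0 > 0" using d a fp0 unfolding r0_def by auto
  define \<gamma> where "\<gamma> = a / (2 * (k - 1)^2)"
  have g: "\<gamma> > 0" using a k unfolding \<gamma>_def by auto
  define e where "e = min (a/2) 1"
  have e: "e > 0" using a unfolding e_def by auto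
  have "\<forall>I R. \<bar>I\<bar> \<le> r0 \<and> \<bar>R\<bar> \<le> r0 \<longrightarrow>
     2 * I * (I * (f R * (1 - I - R) - k)) + \<gamma> * (2 * R * ((k - 1) * I - R)) \<le> - e * (I^2 + \<gamma> * R^2)"
  proof (intro allI impI)
    fix I R :: real assume h: "\<bar>I\<bar> \<le> r0 \<and> \<bar>R\<bar> \<le> r0"
    have "\<bar>R\<bar> < d" using h d r0 unfolding r0_def by auto
    hence fR: "\<bar>f R - f 0\<bar> < a / 6" using d by (auto simp: dist_real_def)
    have r14: "r0 \<le> 1/4" and r8: "r0 \<le> a / (8 * f 0)" unfolding r0_def by auto
    have b1: "\<bar>1 - I - R\<bar> \<le> 3/2" using h r14 by auto
    have "(f R - f 0) * (1 - I - R) \<le> \<bar>f R - f 0\<bar> * \<bar>1 - I - R\<bar>"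
      by (metis abs_ge_self abs_mult)
    also have "\<dots> \<le> (a/6) * (3/2)"
      using fR b1 a by (intro mult_mono) auto
    finally have t1: "(f R - f 0) * (1 - I - R) \<le> a / 4" by simp
    have "f 0 * (- I - R) \<le> f 0 * (2 * r0)" using h fp0 by (intro mult_left_mono) auto
    also have "\<dots> \<le> f 0 * (2 * (a / (8 * f 0)))" using r8 fp0 by (intro mult_left_mono) auto
    also have "\<dots> = a / 4" using fp0 by (simp add: field_simps)
    finally have t2: "f 0 * (- I - R) \<le> a / 4" .
    have "f R * (1 - I - R) - k = (f R - f 0) * (1 - I - R) + f 0 * (- I - R) - a"
      unfolding a_def by (simp add: algebra_simps)
    hence gb: "f R * (1 - I - R) - k \<le> - a / 2" using t1 t2 by simp
    have "2 * I * (I * (f R * (1 - I - R) - k)) = 2 * I^2 * (f R * (1 - I - R) - k)"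
      by (simp add: power2_eq_square)
    also have "\<dots> \<le> 2 * I^2 * (- a / 2)" using gb by (intro mult_left_mono) auto
    finally have s1: "2 * I * (I * (f R * (1 - I - R) - k)) \<le> - a * I^2" by (simp add: mult.commute)
    have kk: "k - 1 > 0" using k by simp
    have iden: "- a * I^2 + \<gamma> * (2 * R * ((k - 1) * I - R)) = - (a/2) * I^2 - \<gamma> * R^2 - (a/2) * (I - R / (k - 1))^2"
      unfolding \<gamma>_def using iden_aux[OF kk] by simp
    have "2 * I * (I * (f R * (1 - I - R) - k)) + \<gamma> * (2 * R * ((k - 1) * I - R))
       \<le> - (a/2) * I^2 - \<gamma> * R^2"
    proof -
      have "(a/2) * (I - R / (k - 1))^2 \<ge> 0" using a by simp
      thus ?thesis using s1 iden by linarith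
    qed
    also have "\<dots> \<le> - e * (I^2 + \<gamma> * R^2)"
    proof -
      have "e * I^2 \<le> (a/2) * I^2" unfolding e_def by (intro mult_right_mono) auto
      moreover have "e * (\<gamma> * R^2) \<le> 1 * (\<gamma> * R^2)" unfolding e_def using g by (intro mult_right_mono) auto
      ultimately show ?thesis by (simp add: algebra_simps)
    qed
    finally show "2 * I * (I * (f R * (1 - I - R) - k)) + \<gamma> * (2 * R * ((k - 1) * I - R)) \<le> - e * (I^2 + \<gamma> * R^2)" .
  qed
  thus ?thesis using r0 g e by blast
qed

lemma sys_sol_restrict:
  assumes "sys_sol f k I R {0..}" shows "sys_sol f k I R {0..T}"
  unfolding sys_sol_def
proof
  fix t assume t: "t \<in> {0..T}"
  hence "t \<in> {0..}" by simp
  hence "(I has_real_derivative I t * (f (R t) * (1 - I t - R t) - k)) (at t within {0..})"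
    "(R has_real_derivative (k - 1) * I t - R t) (at t within {0..})"
    using assms unfolding sys_sol_def by auto
  moreover have "{0..T} \<subseteq> {0..}" by auto
  ultimately show "(I has_real_derivative I t * (f (R t) * (1 - I t - R t) - k)) (at t within {0..T}) \<and>
    (R has_real_derivative (k - 1) * I t - R t) (at t within {0..T})"
    by (auto intro: has_field_derivative_subset)
qed

lemma sq_lt: "(x::real)^2 < r^2 \<Longrightarrow> 0 \<le> r \<Longrightarrow> \<bar>x\<bar> < r"
  by (metis power2_abs power_less_imp_less_base)

lemma trap:
  fixes f :: "real \<Rightarrow> real"
  assumes est: "\<forall>I R. \<bar>I\<bar> \<le> r0 \<and> \<bar>R\<bar> \<le> r0 \<longrightarrow>
     2 * I * (I * (f R * (1 - I - R) - k)) + \<gamma> * (2 * R * ((k - 1) * I - R)) \<le> - e * (I^2 + \<gamma> * R^2)"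
    and g: "\<gamma> > 0" and e: "e > 0" and rho: "0 < \<rho>" "\<rho> \<le> r0"
    and s: "sys_sol f k I R {0..T}"
    and n0: "norm (I 0, R 0) < sqrt (min 1 \<gamma> * \<rho>^2 / (1 + \<gamma>))"
  shows "\<forall>t\<in>{0..T}. I t ^ 2 + \<gamma> * R t ^ 2 < min 1 \<gamma> * \<rho>^2
     \<and> (I t ^ 2 + \<gamma> * R t ^ 2) * exp (e * t) \<le> I 0 ^ 2 + \<gamma> * R 0 ^ 2"
proof -
  define L where "L = min 1 \<gamma> * \<rho>^2"
  define V where "V = (\<lambda>t. I t ^ 2 + \<gamma> * R t ^ 2)"
  define V' where "V' = (\<lambda>s. 2 * I s * (I s * (f (R s) * (1 - I s - R s) - k)) + \<gamma> * (2 * R s * ((k - 1) * I s - R s)))"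
  have dV: "\<forall>s\<in>{0..T}. (V has_real_derivative V' s) (at s within {0..T})"
  proof
    fix s assume "s \<in> {0..T}"
    hence dI: "(I has_real_derivative I s * (f (R s) * (1 - I s - R s) - k)) (at s within {0..T})"
      and dR: "(R has_real_derivative (k - 1) * I s - R s) (at s within {0..T})"
      using s unfolding sys_sol_def by auto
    show "(V has_real_derivative V' s) (at s within {0..T})"
      unfolding V_def V'_def
      by (rule derivative_eq_intros dI dR refl | simp)+
  qed
  have Vnn: "V t \<ge> 0" for t unfolding V_def using g by simp
  have region: "\<bar>I s\<bar> \<le> r0 \<and> \<bar>R s\<bar> \<le> r0" if "V s < L" for s
  proof -
    have "I s ^ 2 < \<rho>^2"
    proof -
      have "I s ^ 2 \<le> V s" unfolding V_def using g by simp
      also have "\<dots> < L" by fact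
      also have "L \<le> 1 * \<rho>^2" unfolding L_def by (intro mult_right_mono) auto
      finally show ?thesis by simp
    qed
    moreover have "R s ^ 2 < \<rho>^2"
    proof -
      have "\<gamma> * R s ^ 2 \<le> V s" unfolding V_def by simp
      also have "\<dots> < L" by fact
      also have "L \<le> \<gamma> * \<rho>^2" unfolding L_def by (intro mult_right_mono) auto
      finally show ?thesis using g by simp
    qed
    ultimately show ?thesis using sq_lt rho by (meson less_eq_real_def order_trans)
  qed
  have dec: "V t * exp (e * t) \<le> V 0" if t: "t \<in> {0..T}" and b: "\<forall>s\<in>{0..<t}. V s < L" for t
  proof (rule decay[OF dV t], intro allI impI)
    fix s assume "0 < s" "s < t"
    hence "V s < L" using b by auto
    hence "\<bar>I s\<bar> \<le> r0 \<and> \<bar>R s\<bar> \<le> r0" by (rule region)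
    thus "V' s \<le> - e * V s" unfolding V'_def V_def using est by blast
  qed
  have V0: "V 0 < L"
  proof -
    have "sqrt (I 0 ^ 2 + R 0 ^ 2) < sqrt (L / (1 + \<gamma>))" using n0 unfolding L_def by (simp add: norm_Pair)
    hence "I 0 ^ 2 + R 0 ^ 2 < L / (1 + \<gamma>)" by simp
    hence "(1 + \<gamma>) * (I 0 ^ 2 + R 0 ^ 2) < L" using g by (simp add: field_simps)
    moreover have "V 0 \<le> (1 + \<gamma>) * (I 0 ^ 2 + R 0 ^ 2)" unfolding V_def using g
      by (simp add: algebra_simps)
    ultimately show ?thesis by simp
  qed
  have bar: "\<forall>t\<in>{0..T}. V t < L"
  proof (rule barrier[OF deriv_cont[OF dV] V0], intro ballI impI)
    fix t assume t: "t \<in> {0..T}" and b: "\<forall>s\<in>{0..<t}. V s < L"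
    have "V t * 1 \<le> V t * exp (e * t)" using Vnn t e by (intro mult_left_mono) auto
    thus "V t \<le> V 0" using dec[OF t b] by simp
  qed
  have "\<forall>t\<in>{0..T}. V t * exp (e * t) \<le> V 0"
  proof
    fix t assume t: "t \<in> {0..T}"
    have "\<forall>s\<in>{0..<t}. V s < L" using bar t by auto
    thus "V t * exp (e * t) \<le> V 0" using dec t by blast
  qed
  thus ?thesis using bar unfolding V_def L_def by auto
qed

lemma las:
  fixes f :: "real \<Rightarrow> real"
  assumes k: "k > 1" and f0: "f 0 < k" and fpos: "\<forall>x. f x > 0" and fc: "continuous_on UNIV f"
  shows "origin_las f k"
proof -
  have "isCont f 0" using fc by (simp add: continuous_on_eq_continuous_at)
  then obtain r0 \<gamma> e where r0: "r0 > 0" and g: "\<gamma> > 0" and e: "e > 0" and est: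
    "\<forall>I R. \<bar>I\<bar> \<le> r0 \<and> \<bar>R\<bar> \<le> r0 \<longrightarrow>
     2 * I * (I * (f R * (1 - I - R) - k)) + \<gamma> * (2 * R * ((k - 1) * I - R)) \<le> - e * (I^2 + \<gamma> * R^2)"
    using local_est[OF k f0 fpos] by blast
  have stable: "origin_stable f k"
    unfolding origin_stable_def
  proof (intro allI impI)
    fix \<epsilon> :: real assume ep: "\<epsilon> > 0"
    define \<rho> where "\<rho> = min (\<epsilon>/2) r0"
    have rho: "0 < \<rho>" "\<rho> \<le> r0" using ep r0 unfolding \<rho>_def by auto
    define \<delta> where "\<delta> = sqrt (min 1 \<gamma> * \<rho>^2 / (1 + \<gamma>))"
    have dpos: "\<delta> > 0" unfolding \<delta>_def using g rho by auto
    have "\<forall>I R T. sys_sol f k I R {0..T} \<and> norm (I 0, R 0) < \<delta>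
        \<longrightarrow> (\<forall>t\<in>{0..T}. norm (I t, R t) < \<epsilon>)"
    proof (intro allI impI ballI)
      fix I R :: "real \<Rightarrow> real" and T t :: real
      assume h: "sys_sol f k I R {0..T} \<and> norm (I 0, R 0) < \<delta>" and t: "t \<in> {0..T}"
      have "I t ^ 2 + \<gamma> * R t ^ 2 < min 1 \<gamma> * \<rho>^2"
        using trap[OF est g e rho, of I R T] h t unfolding \<delta>_def by blast
      hence "min 1 \<gamma> * (I t ^ 2 + R t ^ 2) < min 1 \<gamma> * \<rho>^2"
      proof -
        have "min 1 \<gamma> * (I t ^ 2 + R t ^ 2) \<le> I t ^ 2 + \<gamma> * R t ^ 2"
        proof -
          have "min 1 \<gamma> * I t ^ 2 \<le> 1 * I t ^ 2" by (intro mult_right_mono) auto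
          moreover have "min 1 \<gamma> * R t ^ 2 \<le> \<gamma> * R t ^ 2" by (intro mult_right_mono) auto
          ultimately show ?thesis by (simp add: distrib_left)
        qed
        thus ?thesis using \<open>I t ^ 2 + \<gamma> * R t ^ 2 < min 1 \<gamma> * \<rho>^2\<close> by linarith
      qed
      hence "I t ^ 2 + R t ^ 2 < \<rho>^2" using g by (simp add: mult_less_cancel_left_pos)
      also have "\<rho>^2 \<le> (\<epsilon>/2)^2" using rho unfolding \<rho>_def by (intro power_mono) auto
      also have "\<dots> < \<epsilon>^2" using ep by (simp add: power2_eq_square)
      finally have "sqrt (I t ^ 2 + R t ^ 2) < sqrt (\<epsilon>^2)" by (simp only: real_sqrt_less_iff)
      thus "norm (I t, R t) < \<epsilon>" using ep by (simp add: norm_Pair)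
    qed
    thus "\<exists>\<delta>>0. \<forall>I R T. sys_sol f k I R {0..T} \<and> norm (I 0, R 0) < \<delta>
        \<longrightarrow> (\<forall>t\<in>{0..T}. norm (I t, R t) < \<epsilon>)" using dpos by blast
  qed
  have attr: "origin_attractive f k"
    unfolding origin_attractive_def
  proof
    define \<delta> where "\<delta> = sqrt (min 1 \<gamma> * r0^2 / (1 + \<gamma>))"
    have dpos: "\<delta> > 0" unfolding \<delta>_def using g r0 by auto
    have "\<forall>I R. sys_sol f k I R {0..} \<and> norm (I 0, R 0) < \<delta>
        \<longrightarrow> ((\<lambda>t. (I t, R t)) \<longlongrightarrow> (0, 0)) at_top"
    proof (intro allI impI)
      fix I R :: "real \<Rightarrow> real"
      assume h: "sys_sol f k I R {0..} \<and> norm (I 0, R 0) < \<delta>"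
      define V0 where "V0 = I 0 ^ 2 + \<gamma> * R 0 ^ 2"
      have bnd: "I t ^ 2 + \<gamma> * R t ^ 2 \<le> V0 * exp (- e * t)" if t: "t \<ge> 0" for t
      proof -
        have "(I t ^ 2 + \<gamma> * R t ^ 2) * exp (e * t) \<le> V0"
          using trap[OF est g e r0 order.refl, of I R t] sys_sol_restrict[of f k I R t] h t
          unfolding \<delta>_def V0_def by auto
        thus ?thesis by (simp add: exp_minus divide_inverse[symmetric] pos_le_divide_eq)
      qed
      have "(I \<longlongrightarrow> 0) at_top"
      proof (rule root_bound_tendsto[of 2 e I V0])
        show "\<forall>t\<ge>0. \<bar>I t\<bar> ^ 2 \<le> V0 * exp (- e * t)"
        proof (intro allI impI)
          fix t :: real assume "t \<ge> 0"
          moreover have "\<gamma> * R t ^ 2 \<ge> 0" using g by simp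
          ultimately show "\<bar>I t\<bar> ^ 2 \<le> V0 * exp (- e * t)" using bnd by force
        qed
      qed (use e in auto)
      moreover have "(R \<longlongrightarrow> 0) at_top"
      proof (rule root_bound_tendsto[of 2 e R "V0 / \<gamma>"])
        show "\<forall>t\<ge>0. \<bar>R t\<bar> ^ 2 \<le> V0 / \<gamma> * exp (- e * t)"
        proof (intro allI impI)
          fix t :: real assume "t \<ge> 0"
          hence "\<gamma> * R t ^ 2 \<le> V0 * exp (- e * t)" using bnd[of t]
            by (smt (verit) zero_le_power2)
          thus "\<bar>R t\<bar> ^ 2 \<le> V0 / \<gamma> * exp (- e * t)" using g by (simp add: field_simps)
        qed
      qed (use e in auto)
      ultimately show "((\<lambda>t. (I t, R t)) \<longlongrightarrow> (0, 0)) at_top" by (rule tendsto_Pair)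
    qed
    thus "\<delta> > 0 \<and> (\<forall>I R. sys_sol f k I R {0..} \<and> norm (I 0, R 0) < \<delta>
        \<longrightarrow> ((\<lambda>t. (I t, R t)) \<longlongrightarrow> (0, 0)) at_top)" using dpos by blast
  qed
  show ?thesis unfolding origin_las_def using stable attr by blast
qed

lemma pw:
  fixes x y X Y c \<delta> F B q1 q2 :: real and p :: nat
  assumes x: "x \<ge> 0" and y: "y \<ge> 0" and cpos: "c > 0" and d: "\<delta> > 0" and F: "F \<ge> 0" and B: "B \<ge> 0"
    and q: "0 < q1" "q1 < 1" "1 < q2" and p: "p \<ge> 1"
    and hA: "x \<ge> q1 * y \<Longrightarrow> X \<le> - c * x"
    and hB: "x \<le> q2 * y \<Longrightarrow> Y \<le> - \<delta> * y"
    and hC: "X \<le> F * x" and hD: "Y \<le> B * x"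
    and P1: "B * (1 / q2) ^ (p - 1) \<le> c / 2" and P2: "F * q1 ^ p \<le> \<delta> / 2"
  shows "x ^ (p - 1) * X + y ^ (p - 1) * Y \<le> - (min c \<delta> / 4) * (x ^ p + y ^ p)"
proof -
  have xp: "x ^ (p - 1) * x = x ^ p" using p by (metis Suc_diff_le diff_Suc_1 power_Suc2)
  have yp: "y ^ (p - 1) * y = y ^ p" using p by (metis Suc_diff_le diff_Suc_1 power_Suc2)
  have m1: "min c \<delta> \<le> c" "min c \<delta> \<le> \<delta>" by auto
  have xpn: "x ^ p \<ge> 0" "y ^ p \<ge> 0" "x ^ (p - 1) \<ge> 0" "y ^ (p - 1) \<ge> 0" using x y by auto
  consider (a) "x \<ge> q2 * y" | (b) "x \<le> q1 * y" | (c) "q1 * y < x" "x < q2 * y" by linarith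
  thus ?thesis
  proof cases
    case a
    have "q1 * y \<le> q2 * y" using q y by (intro mult_right_mono) auto
    hence "x \<ge> q1 * y" using a by linarith
    hence "x ^ (p - 1) * X \<le> x ^ (p - 1) * (- c * x)" using hA xpn by (intro mult_left_mono) auto
    hence t1: "x ^ (p - 1) * X \<le> - c * x ^ p" using xp by (simp add: algebra_simps)
    have yx: "y \<le> x * (1 / q2)" using a q by (simp add: field_simps)
    have "1 * y \<le> q2 * y" using q y by (intro mult_right_mono) auto
    hence yx': "y \<le> x" using a by linarith
    have "y ^ (p - 1) \<le> (x * (1 / q2)) ^ (p - 1)" using yx y by (intro power_mono) auto
    hence "y ^ (p - 1) \<le> x ^ (p - 1) * (1 / q2) ^ (p - 1)" by (metis power_mult_distrib)
    hence "y ^ (p - 1) * (B * x) \<le> x ^ (p - 1) * (1 / q2) ^ (p - 1) * (B * x)"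
      using B x by (intro mult_right_mono) auto
    also have "\<dots> = (B * (1 / q2) ^ (p - 1)) * (x ^ (p - 1) * x)" by (simp add: algebra_simps)
    also have "\<dots> = (B * (1 / q2) ^ (p - 1)) * x ^ p" using xp by simp
    also have "\<dots> \<le> (c / 2) * x ^ p" using P1 xpn by (intro mult_right_mono) auto
    finally have t2a: "y ^ (p - 1) * (B * x) \<le> (c / 2) * x ^ p" .
    have "y ^ (p - 1) * Y \<le> y ^ (p - 1) * (B * x)" using hD xpn by (intro mult_left_mono) auto
    with t2a have t2: "y ^ (p - 1) * Y \<le> (c / 2) * x ^ p" by linarith
    have ypx: "y ^ p \<le> x ^ p" using yx' y by (intro power_mono) auto
    have "min c \<delta> / 4 * (x ^ p + y ^ p) \<le> c / 4 * (x ^ p + x ^ p)"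
      using m1 ypx xpn cpos by (intro mult_mono) auto
    hence "- (min c \<delta> / 4) * (x ^ p + y ^ p) \<ge> - c * x ^ p + (c / 2) * x ^ p" by simp
    thus ?thesis using t1 t2 by linarith
  next
    case b
    have "q1 * y \<le> q2 * y" using q y by (intro mult_right_mono) auto
    hence "x \<le> q2 * y" using b by linarith
    hence "y ^ (p - 1) * Y \<le> y ^ (p - 1) * (- \<delta> * y)" using hB xpn by (intro mult_left_mono) auto
    hence t1: "y ^ (p - 1) * Y \<le> - \<delta> * y ^ p" using yp by (simp add: algebra_simps)
    have "q1 * y \<le> 1 * y" using q y by (intro mult_right_mono) auto
    hence xy': "x \<le> y" using b by linarith
    have "x ^ (p - 1) * X \<le> x ^ (p - 1) * (F * x)" using hC xpn by (intro mult_left_mono) auto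
    also have "\<dots> = F * x ^ p" using xp by (simp add: algebra_simps)
    also have "\<dots> \<le> F * (q1 * y) ^ p" using b x F by (intro mult_left_mono power_mono) auto
    also have "\<dots> = (F * q1 ^ p) * y ^ p" by (simp add: power_mult_distrib)
    also have "\<dots> \<le> (\<delta> / 2) * y ^ p" using P2 xpn by (intro mult_right_mono) auto
    finally have t2: "x ^ (p - 1) * X \<le> (\<delta> / 2) * y ^ p" .
    have xpy: "x ^ p \<le> y ^ p" using xy' x by (intro power_mono) auto
    have "min c \<delta> / 4 * (x ^ p + y ^ p) \<le> \<delta> / 4 * (y ^ p + y ^ p)"
      using m1 xpy xpn d by (intro mult_mono) auto
    hence "- (min c \<delta> / 4) * (x ^ p + y ^ p) \<ge> - \<delta> * y ^ p + (\<delta> / 2) * y ^ p" by simp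
    thus ?thesis using t1 t2 by linarith
  next
    case c
    have "x ^ (p - 1) * X \<le> x ^ (p - 1) * (- c * x)" using hA c xpn by (intro mult_left_mono) auto
    hence t1: "x ^ (p - 1) * X \<le> - c * x ^ p" using xp by (simp add: algebra_simps)
    have "y ^ (p - 1) * Y \<le> y ^ (p - 1) * (- \<delta> * y)" using hB c xpn by (intro mult_left_mono) auto
    hence t2: "y ^ (p - 1) * Y \<le> - \<delta> * y ^ p" using yp by (simp add: algebra_simps)
    have "min c \<delta> / 4 * x ^ p \<le> c * x ^ p" using m1 xpn cpos by (intro mult_right_mono) auto
    moreover have "min c \<delta> / 4 * y ^ p \<le> \<delta> * y ^ p" using m1 xpn d by (intro mult_right_mono) auto
    ultimately have "- (min c \<delta> / 4) * (x ^ p + y ^ p) \<ge> - c * x ^ p - \<delta> * y ^ p"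
      by (simp add: algebra_simps)
    thus ?thesis using t1 t2 by linarith
  qed
qed

lemma glob_consts:
  fixes f :: "real \<Rightarrow> real"
  assumes k: "k > 1" and fpos: "\<forall>x. f x > 0" and fc: "continuous_on UNIV f" and f0: "f 0 < k"
    and noeq: "\<forall>p\<in>Zreg. is_equilibrium f k p \<longrightarrow> p = (0, 0)"
  shows "\<exists>\<beta>1 \<beta>2 c \<delta> F. 0 < \<beta>1 \<and> \<beta>1 < \<beta>2 \<and> \<beta>2 < 1 / (k - 1) \<and> c > 0 \<and> \<delta> > 0 \<and> F > 0 \<and>
     (\<forall>I R. I \<ge> 0 \<and> R \<ge> 0 \<and> I \<ge> \<beta>1 * R \<longrightarrow> f R * (1 - I - R) - k \<le> - c) \<and>
     (\<forall>I R. R \<ge> 0 \<and> I \<le> \<beta>2 * R \<longrightarrow> (k - 1) * I - R \<le> - \<delta> * R) \<and>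
     (\<forall>I R. I \<ge> 0 \<and> R \<ge> 0 \<longrightarrow> f R * (1 - I - R) - k \<le> F)"
proof -
  have kk: "k - 1 > 0" using k by simp
  have fnn: "\<forall>x. f x \<ge> 0" using fpos less_imp_le by blast
  define h where "h = (\<lambda>R. f R * (1 - k * R / (k - 1)) - k)"
  have hc: "continuous_on S h" for S unfolding h_def
    using kk by (intro continuous_intros continuous_on_subset[OF fc]) auto
  have h0: "h 0 < 0" unfolding h_def using f0 by simp
  have G1: "h R < 0" if R: "R \<in> {0..(k-1)/k}" for R
  proof (rule ccontr)
    assume "\<not> h R < 0"
    hence "h 0 \<le> 0" "0 \<le> h R" using h0 by auto
    then obtain R1 where R1: "0 \<le> R1" "R1 \<le> R" "h R1 = 0"
      using IVT'[of h 0 0 R, OF _ _ _ hc] R by auto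
    have R1p: "R1 \<noteq> 0" using R1 h0 by auto
    have Rle: "R1 \<le> (k - 1) / k" using R1 R by auto
    hence "k * R1 \<le> k - 1" using k by (simp add: field_simps)
    hence sum: "R1 / (k - 1) + R1 \<le> 1" using kk by (simp add: field_simps)
    have "(k - 1) / k \<le> 1" using k by simp
    hence R1le1: "R1 \<le> 1" using Rle by linarith
    have "R1 / (k - 1) \<le> 1" using sum R1 by linarith
    moreover have "0 \<le> R1 / (k - 1)" using R1 kk by simp
    ultimately have inZ: "(R1 / (k - 1), R1) \<in> Zreg" unfolding Zreg_def using R1 sum R1le1
      by auto
    have id1: "1 - R1 / (k - 1) - R1 = 1 - k * R1 / (k - 1)" using kk by (simp add: field_simps)
    have "is_equilibrium f k (R1 / (k - 1), R1)"
      unfolding is_equilibrium_def using R1(3) kk by (simp add: id1 h_def)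
    hence "(R1 / (k - 1), R1) = (0, 0)" using noeq inZ by blast
    thus False using R1p by simp
  qed
  obtain x where x: "x \<in> {0..(k-1)/k}" "\<forall>y\<in>{0..(k-1)/k}. h y \<le> h x"
    using continuous_attains_sup[OF compact_Icc _ hc, of 0 "(k-1)/k"] kk k by auto
  define m where "m = - h x"
  have mpos: "m > 0" using G1[OF x(1)] unfolding m_def by simp
  have hm: "\<forall>R\<in>{0..(k-1)/k}. h R \<le> - m" using x unfolding m_def by auto
  have "h 0 \<le> - m" using hm kk k by auto
  moreover have "h 0 > - k" unfolding h_def using fpos by simp
  ultimately have mk: "m < k" by simp
  obtain z where z: "z \<in> {0..1::real}" "\<forall>y\<in>{0..1}. f y \<le> f z"
    using continuous_attains_sup[OF compact_Icc _ continuous_on_subset[OF fc], of 0 1] by auto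
  define F where "F = f z"
  have Fpos: "F > 0" unfolding F_def using fpos by auto
  have fF: "f R \<le> F" if "0 \<le> R" "R \<le> 1" for R using z that unfolding F_def by auto
  define b0 where "b0 = 1 / (k - 1)"
  have b0: "b0 > 0" unfolding b0_def using kk by simp
  define d where "d = min (b0 / 2) (m / (2 * F))"
  have dpos: "d > 0" unfolding d_def using b0 mpos Fpos by auto
  have db0: "d \<le> b0 / 2" unfolding d_def by auto
  have Fd: "F * d \<le> m / 2"
  proof -
    have "F * d \<le> F * (m / (2 * F))" using Fpos unfolding d_def by (intro mult_left_mono) auto
    thus ?thesis using Fpos by simp
  qed
  define \<beta>1 where "\<beta>1 = b0 - d"
  define \<beta>2 where "\<beta>2 = b0 - d / 3"
  define \<delta> where "\<delta> = (k - 1) * d / 3"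
  have b1pos: "\<beta>1 > 0" unfolding \<beta>1_def using db0 b0 by simp
  have b12: "\<beta>1 < \<beta>2" "\<beta>2 < 1 / (k - 1)" unfolding \<beta>1_def \<beta>2_def b0_def using dpos by auto
  have dlt: "\<delta> > 0" unfolding \<delta>_def using kk dpos by simp
  have cA: "f R * (1 - I - R) - k \<le> - (m / 2)" if h: "I \<ge> 0" "R \<ge> 0" "I \<ge> \<beta>1 * R" for I R
  proof -
    have "f R * (1 - I - R) \<le> f R * (1 - (1 + \<beta>1) * R)"
      using h fnn by (intro mult_left_mono) (auto simp: algebra_simps)
    moreover have "f R * (1 - (1 + \<beta>1) * R) \<le> k - m / 2"
    proof -
      have iden: "1 - (1 + \<beta>1) * R = (1 - k * R / (k - 1)) + d * R"
        unfolding \<beta>1_def b0_def using kk by (simp add: field_simps)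
      show ?thesis
      proof (cases "R \<le> (k - 1) / k")
        case True
        have R1: "R \<le> 1" using True k kk
          by (smt (verit, best) divide_le_eq_1_pos)
        have "f R * (1 - (1 + \<beta>1) * R) = h R + k + f R * (d * R)"
          unfolding h_def iden by (simp add: algebra_simps)
        also have "\<dots> \<le> - m + k + F * d"
        proof -
          have "h R \<le> - m" using hm True h by auto
          moreover have "f R * (d * R) \<le> F * (d * 1)"
            using fF[OF h(2) R1] h R1 dpos fnn Fpos by (intro mult_mono) auto
          ultimately show ?thesis by simp
        qed
        finally show ?thesis using Fd by simp
      next
        case False
        show ?thesis
        proof (cases "1 - (1 + \<beta>1) * R \<le> 0")
          case True
          hence "f R * (1 - (1 + \<beta>1) * R) \<le> 0" using fnn by (simp add: mult_nonneg_nonpos)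
          thus ?thesis using mk k by linarith
        next
          case F2: False
          have "(1 + \<beta>1) * R < 1" using F2 by simp
          moreover have "0 \<le> \<beta>1 * R" using b1pos h(2) by simp
          ultimately have R1: "R \<le> 1" by (simp add: algebra_simps)
          have "1 - k * R / (k - 1) < 0" using False kk k by (simp add: field_simps)
          moreover have "d * R \<le> d * 1" using dpos R1 by (intro mult_left_mono) auto
          ultimately have "1 - (1 + \<beta>1) * R \<le> d * 1" using iden by linarith
          hence "f R * (1 - (1 + \<beta>1) * R) \<le> F * d"
            using fF[OF h(2) R1] F2 fnn dpos Fpos by (intro mult_mono) auto
          thus ?thesis using Fd mk by linarith
        qed
      qed
    qed
    ultimately show ?thesis by simp
  qed
  have cB: "(k - 1) * I - R \<le> - \<delta> * R" if h: "R \<ge> 0" "I \<le> \<beta>2 * R" for I R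
  proof -
    have "(k - 1) * I \<le> (k - 1) * (\<beta>2 * R)" using h kk by (intro mult_left_mono) auto
    moreover have "(k - 1) * (\<beta>2 * R) = R - \<delta> * R"
      unfolding \<beta>2_def b0_def \<delta>_def using kk by (simp add: field_simps)
    ultimately show ?thesis by simp
  qed
  have cC: "f R * (1 - I - R) - k \<le> F" if h: "I \<ge> 0" "R \<ge> 0" for I R
  proof (cases "I + R \<le> 1")
    case True
    have "f R * (1 - I - R) \<le> F * 1" using fF[OF h(2)] True h fnn Fpos by (intro mult_mono) auto
    thus ?thesis using k by simp
  next
    case False
    hence "f R * (1 - I - R) \<le> 0" using fnn by (simp add: mult_nonneg_nonpos)
    thus ?thesis using k Fpos by simp
  qed
  show ?thesis
    using b1pos b12 mpos dlt Fpos cA cB cC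
    by (intro exI[of _ \<beta>1] exI[of _ \<beta>2] exI[of _ "m/2"] exI[of _ \<delta>] exI[of _ F]) auto
qed


lemma global_conv:
  fixes f I R :: "real \<Rightarrow> real"
  assumes k: "k > 1" and fpos: "\<forall>x. f x > 0" and fc: "continuous_on UNIV f" and f0: "f 0 < k"
    and noeq: "\<forall>p\<in>Zreg. is_equilibrium f k p \<longrightarrow> p = (0, 0)"
    and s: "sys_sol f k I R {0..}" and z: "(I 0, R 0) \<in> Zreg"
  shows "((\<lambda>t. (I t, R t)) \<longlongrightarrow> (0, 0)) at_top"
proof -
  obtain \<beta>1 \<beta>2 c \<delta> F where H: "0 < \<beta>1 \<and> \<beta>1 < \<beta>2 \<and> \<beta>2 < 1 / (k - 1) \<and> c > 0 \<and> \<delta> > 0 \<and> F > 0 \<and>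
     (\<forall>I R. I \<ge> 0 \<and> R \<ge> 0 \<and> I \<ge> \<beta>1 * R \<longrightarrow> f R * (1 - I - R) - k \<le> - c) \<and>
     (\<forall>I R. R \<ge> 0 \<and> I \<le> \<beta>2 * R \<longrightarrow> (k - 1) * I - R \<le> - \<delta> * R) \<and>
     (\<forall>I R. I \<ge> 0 \<and> R \<ge> 0 \<longrightarrow> f R * (1 - I - R) - k \<le> F)"
    using glob_consts[OF k fpos fc f0 noeq] by (elim exE) (rule that)
  have b1: "0 < \<beta>1" using H by (elim conjE) assumption
  have b2: "\<beta>1 < \<beta>2" using H by (elim conjE) assumption
  have b3: "\<beta>2 < 1 / (k - 1)" using H by (elim conjE) assumption
  have c: "c > 0" using H by (elim conjE) assumption
  have d: "\<delta> > 0" using H by (elim conjE) assumption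
  have F: "F > 0" using H by (elim conjE) assumption
  note b = b1 b2 b3
  have cA: "\<forall>I R. I \<ge> 0 \<and> R \<ge> 0 \<and> I \<ge> \<beta>1 * R \<longrightarrow> f R * (1 - I - R) - k \<le> - c"
    using H by (elim conjE) assumption
  have cB: "\<forall>I R. R \<ge> 0 \<and> I \<le> \<beta>2 * R \<longrightarrow> (k - 1) * I - R \<le> - \<delta> * R"
    using H by (elim conjE) assumption
  have cC: "\<forall>I R. I \<ge> 0 \<and> R \<ge> 0 \<longrightarrow> f R * (1 - I - R) - k \<le> F"
    using H by (elim conjE) assumption
  define \<beta> where "\<beta> = (\<beta>1 + \<beta>2) / 2"
  have bpos: "\<beta> > 0" unfolding \<beta>_def using b by simp
  define q1 where "q1 = \<beta>1 / \<beta>"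
  define q2 where "q2 = \<beta>2 / \<beta>"
  have q: "0 < q1" "q1 < 1" "1 < q2" unfolding q1_def q2_def \<beta>_def using b by (auto simp: field_simps)
  define B where "B = \<beta> * (k - 1)"
  have B: "B \<ge> 0" unfolding B_def using bpos k by simp
  obtain n1 where n1: "(1 / q2) ^ n1 < c / (2 * (B + 1))"
    using real_arch_pow_inv[of "c / (2 * (B + 1))" "1 / q2"] c B q by auto
  obtain n2 where n2: "q1 ^ n2 < \<delta> / (2 * (F + 1))"
    using real_arch_pow_inv[of "\<delta> / (2 * (F + 1))" q1] d F q by auto
  define p where "p = n1 + n2 + 1"
  have p1: "p \<ge> 1" unfolding p_def by simp
  have P1: "B * (1 / q2) ^ (p - 1) \<le> c / 2"
  proof -
    have "(1 / q2) ^ (p - 1) \<le> (1 / q2) ^ n1" unfolding p_def using q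
      by (intro power_decreasing) auto
    hence "(1 / q2) ^ (p - 1) \<le> c / (2 * (B + 1))" using n1 by linarith
    hence "B * (1 / q2) ^ (p - 1) \<le> (B + 1) * (c / (2 * (B + 1)))"
      using B q by (intro mult_mono) auto
    moreover have "(B + 1) * (c / (2 * (B + 1))) = c / 2" using B by (simp add: field_simps)
    ultimately show ?thesis by linarith
  qed
  have P2: "F * q1 ^ p \<le> \<delta> / 2"
  proof -
    have "q1 ^ p \<le> q1 ^ n2" unfolding p_def using q by (intro power_decreasing) auto
    hence "q1 ^ p \<le> \<delta> / (2 * (F + 1))" using n2 by linarith
    hence "F * q1 ^ p \<le> (F + 1) * (\<delta> / (2 * (F + 1)))"
      using F q by (intro mult_mono) auto
    moreover have "(F + 1) * (\<delta> / (2 * (F + 1))) = \<delta> / 2" using F by (simp add: field_simps)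
    ultimately show ?thesis by linarith
  qed
  define e where "e = min c \<delta> / 4"
  have e: "e > 0" unfolding e_def using c d by simp
  define V where "V = (\<lambda>s. I s ^ p + (\<beta> * R s) ^ p)"
  have z0: "I 0 \<ge> 0" "R 0 \<ge> 0" using z unfolding Zreg_def by auto
  have main: "I t \<ge> 0 \<and> R t \<ge> 0 \<and> V t \<le> V 0 * exp (- e * t)" if t: "t \<ge> 0" for t
  proof -
    have st: "sys_sol f k I R {0..t}" by (rule sys_sol_restrict[OF s])
    have nn: "\<forall>s\<in>{0..t}. I s \<ge> 0 \<and> R s \<ge> 0" using nonneg_inv[OF st fc k z0] .
    define g where "g = (\<lambda>s. f (R s) * (1 - I s - R s) - k)"
    define V' where "V' = (\<lambda>s. of_nat p * ((I s * g s) * I s ^ (p - Suc 0)) + of_nat p * ((\<beta> * ((k - 1) * I s - R s)) * (\<beta> * R s) ^ (p - Suc 0)))"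
    have dV: "\<forall>s\<in>{0..t}. (V has_real_derivative V' s) (at s within {0..t})"
    proof
      fix s assume "s \<in> {0..t}"
      hence dI: "(I has_real_derivative I s * g s) (at s within {0..t})"
        and dR: "(R has_real_derivative (k - 1) * I s - R s) (at s within {0..t})"
        using st unfolding sys_sol_def g_def by auto
      show "(V has_real_derivative V' s) (at s within {0..t})"
        unfolding V_def V'_def
        by (rule DERIV_add[OF DERIV_power[OF dI] DERIV_power[OF DERIV_cmult[OF dR]]])
    qed
    have "V t * exp (e * t) \<le> V 0"
    proof (rule decay[OF dV], use t in simp, intro allI impI)
      fix s assume s: "0 < s" "s < t"
      have Is: "I s \<ge> 0" and Rs: "R s \<ge> 0" using nn s by auto
      have yy: "\<beta> * R s \<ge> 0" using bpos Rs by simp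
      have eq1: "q1 * (\<beta> * R s) = \<beta>1 * R s" unfolding q1_def using bpos by simp
      have eq2: "q2 * (\<beta> * R s) = \<beta>2 * R s" unfolding q2_def using bpos by simp
      have "I s ^ (p - 1) * (I s * g s) + (\<beta> * R s) ^ (p - 1) * (\<beta> * ((k - 1) * I s - R s))
          \<le> - e * (I s ^ p + (\<beta> * R s) ^ p)"
        unfolding e_def
      proof (rule pw[OF Is yy c d less_imp_le[OF F] B q p1 _ _ _ _ P1 P2])
        assume "q1 * (\<beta> * R s) \<le> I s"
        hence "I s \<ge> \<beta>1 * R s" using eq1 by simp
        hence "g s \<le> - c" using cA Is Rs unfolding g_def by blast
        hence "I s * g s \<le> I s * (- c)" using Is by (intro mult_left_mono) auto
        thus "I s * g s \<le> - c * I s" by (simp add: mult.commute)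
      next
        assume "I s \<le> q2 * (\<beta> * R s)"
        hence "I s \<le> \<beta>2 * R s" using eq2 by simp
        hence "(k - 1) * I s - R s \<le> - \<delta> * R s" using cB Rs by blast
        hence "\<beta> * ((k - 1) * I s - R s) \<le> \<beta> * (- \<delta> * R s)" using bpos by (intro mult_left_mono) auto
        thus "\<beta> * ((k - 1) * I s - R s) \<le> - \<delta> * (\<beta> * R s)" by (simp add: algebra_simps)
      next
        have "g s \<le> F" using cC Is Rs unfolding g_def by blast
        hence "I s * g s \<le> I s * F" using Is by (intro mult_left_mono) auto
        thus "I s * g s \<le> F * I s" by (simp add: mult.commute)
      next
        have "\<beta> * ((k - 1) * I s - R s) \<le> \<beta> * ((k - 1) * I s)" using bpos Rs by (intro mult_left_mono) auto
        thus "\<beta> * ((k - 1) * I s - R s) \<le> B * I s" unfolding B_def by (simp add: algebra_simps)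
      qed
      note h1 = this
      have h2: "0 \<le> I s ^ p + (\<beta> * R s) ^ p" using Is yy by simp
        have "real p * (I s ^ (p - 1) * (I s * g s) + (\<beta> * R s) ^ (p - 1) * (\<beta> * ((k - 1) * I s - R s)))
            \<le> real p * (- e * (I s ^ p + (\<beta> * R s) ^ p))" using h1 by (intro mult_left_mono) auto
        also have "\<dots> \<le> 1 * (- e * (I s ^ p + (\<beta> * R s) ^ p))"
          using p1 e h2 by (intro mult_right_mono_neg) (auto simp: mult_nonneg_nonneg)
        moreover have "V' s = real p * (I s ^ (p - 1) * (I s * g s) + (\<beta> * R s) ^ (p - 1) * (\<beta> * ((k - 1) * I s - R s)))"
          unfolding V'_def by (simp add: distrib_left mult.commute)
        ultimately show "V' s \<le> - e * V s" by (simp add: V_def)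
    qed
    hence X: "V t * exp (e * t) * exp (- e * t) \<le> V 0 * exp (- e * t)" by (rule mult_right_mono) simp
    have eq: "V t * exp (e * t) * exp (- e * t) = V t" by (simp add: mult.assoc mult_exp_exp)
    have "V t \<le> V 0 * exp (- e * t)" using X unfolding eq .
    thus ?thesis using nn t by auto
  qed
  have "(I \<longlongrightarrow> 0) at_top"
  proof (rule root_bound_tendsto[of p e I "V 0"])
    show "\<forall>t\<ge>0. \<bar>I t\<bar> ^ p \<le> V 0 * exp (- e * t)"
    proof (intro allI impI)
      fix t :: real assume t: "t \<ge> 0"
      have "(\<beta> * R t) ^ p \<ge> 0" using main[OF t] bpos by simp
      thus "\<bar>I t\<bar> ^ p \<le> V 0 * exp (- e * t)" using main[OF t] unfolding V_def by auto
    qed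
  qed (use e p1 in auto)
  moreover have "(R \<longlongrightarrow> 0) at_top"
  proof (rule root_bound_tendsto[of p e R "V 0 / \<beta> ^ p"])
    show "\<forall>t\<ge>0. \<bar>R t\<bar> ^ p \<le> V 0 / \<beta> ^ p * exp (- e * t)"
    proof (intro allI impI)
      fix t :: real assume t: "t \<ge> 0"
      have "I t ^ p \<ge> 0" using main[OF t] by simp
      moreover have "V t = I t ^ p + \<beta> ^ p * R t ^ p" by (simp add: V_def power_mult_distrib)
      ultimately have "\<beta> ^ p * R t ^ p \<le> V 0 * exp (- e * t)" using main[OF t] by linarith
      thus "\<bar>R t\<bar> ^ p \<le> V 0 / \<beta> ^ p * exp (- e * t)" using main[OF t] bpos
        by (simp add: field_simps)
    qed
  qed (use e p1 in auto)
  ultimately show ?thesis by (rule tendsto_Pair)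
qed


theorem lemma4:
  fixes f :: "real \<Rightarrow> real" and k :: real
  assumes "k > 1"
    and "\<forall>x. f x > 0"
    and "\<forall>x. f differentiable (at x)"
    and "continuous_on UNIV (deriv f)"
    and "f 0 / k < 1"
    and "\<forall>p\<in>Zreg. is_equilibrium f k p \<longrightarrow> p = (0, 0)"
  shows "origin_globally_stable f k"
proof -
  have fc: "continuous_on UNIV f"
    using assms(3) by (intro continuous_at_imp_continuous_on ballI differentiable_imp_continuous_within) auto
  have kpos: "k > 0" using assms(1) by simp
  have f0: "f 0 < k" using assms(5) kpos by (simp add: pos_divide_less_eq)
  have L: "origin_las f k" by (rule las[OF assms(1) f0 assms(2) fc])
  have G: "\<forall>I R. sys_sol f k I R {0..} \<and> (I 0, R 0) \<in> Zreg
        \<longrightarrow> ((\<lambda>t. (I t, R t)) \<longlongrightarrow> (0, 0)) at_top"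
    using global_conv[OF assms(1) assms(2) fc f0 assms(6)] by blast
  show ?thesis unfolding origin_globally_stable_def using L G by blast
qed

end
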